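(* Let $\mathcal A$ be a commutative semiring, $n\ge2$, $V_n$ the free $\mathcal A$-module with basis $b_0,\dots,b_{n-1}$, $f\in\operatorname{End}_{\mathcal A}(V_n)$, $D(z)$ the Hasse–Schmidt derivation on $\bigwedge V_n$ associated with $f$ and $\overline D(z)$ its quasi-inverse on $\bigwedge^2V_n$. Then for all $u,v\in V_n$: $$D(z)\,\overline D(z)(u\wedge v)\succeq u\wedge v\qquad\text{and}\qquad \overline D(z)\,D(z)(u\wedge v)\succeq u\wedge v .$$
   Context: $\bigwedge V_n=\bigoplus_{r\ge0}\bigwedge^rV_n$ is the graded associative $\mathcal A$-semialgebra with product $\wedge$ such that $\bigwedge^0V_n=\mathcal A$, $\bigwedge^1V_n=V_n$, and for $r\ge2$, $\bigwedge^rV_n$ is the free $\mathcal A$-module with basis $\{b_I,b_I':|I|=r\}$, $b_I=b_{i_1}\wedge\cdots\wedge b_{i_r}$ for $I=\{i_1<\dots<i_r\}\subseteq\{0,\dots,n-1\}$. For $r\ge2$ the negation map $(-)$ is the $\mathcal A$-linear involution of $\bigwedge^rV_n$ exchanging $b_I,b_I'$, compatible with $\wedge$; $b_i\wedge b_i=\mathbb 0$ and $u\wedge w=(-)(w\wedge u)$ for $u,w\in V_n$. A quasi-zero is an element $x+(-)x$; $x\succeq y$ means $x=y+d$ with $d$ in the ideal generated by quasi-zeros and all $w\wedge w$ ($w\in V_n$), coefficientwise for power series in $z$. $D(z)=\sum_iD_iz^i$, $D_i\in\operatorname{End}_{\mathcal A}(\bigwedge V_n)$ degree-preserving, $D(z)(x\wedge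 y)=D(z)x\wedge D(z)y$, $D_iv=f^i(v)$ for $v\in V_n$ (so $D_1=f$ on $V_n$). On $\bigwedge^2V_n$, $\overline D(z)(x\wedge y)=x\wedge y+(f(y)\wedge x+y\wedge f(x))z+(f(x)\wedge f(y))z^2$ for $x,y\in V_n$, extended additively and coefficientwise to power series in $z$. *)

theory Defs
  imports Main
begin

text \<open>The index type 'n (finite, CARD('n) = n) stands for the basis
 indices 0..n-1.  V_n is  'n \<Rightarrow> 'a  (coordinates w.r.t. b_i).
 An element of the second exterior power is encoded as  x :: 'n \<Rightarrow> 'n \<Rightarrow> 'a  with
 zero diagonal, where  x i j  (i \<noteq> j) is the coefficient of  b_i \<and> b_j; for i<j this
 is the coefficient of b_{ij}, for i>j the coefficient of b_{ji}' = (-) b_{ji}.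
 A power series in z with coefficients in the second exterior power is a map
 nat \<Rightarrow> ('n \<Rightarrow> 'n \<Rightarrow> 'a).\<close>

definition basis :: "'n \<Rightarrow> 'n \<Rightarrow> 'a::comm_semiring_1" where
  "basis i = (\<lambda>j. if j = i then 1 else 0)"

definition wedge :: "('n \<Rightarrow> 'a::comm_semiring_1) \<Rightarrow> ('n \<Rightarrow> 'a) \<Rightarrow> 'n \<Rightarrow> 'n \<Rightarrow> 'a" where
  "wedge u v = (\<lambda>i j. if i = j then 0 else u i * v j)"

definition zero2 :: "'n \<Rightarrow> 'n \<Rightarrow> 'a::comm_semiring_1" where
  "zero2 = (\<lambda>i j. 0)"

definition add2 :: "('n \<Rightarrow> 'n \<Rightarrow> 'a::comm_semiring_1) \<Rightarrow> ('n \<Rightarrow> 'n \<Rightarrow> 'a) \<Rightarrow> 'n \<Rightarrow> 'n \<Rightarrow> 'a" where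
  "add2 x y = (\<lambda>i j. x i j + y i j)"

definition smult2 :: "'a::comm_semiring_1 \<Rightarrow> ('n \<Rightarrow> 'n \<Rightarrow> 'a) \<Rightarrow> 'n \<Rightarrow> 'n \<Rightarrow> 'a" where
  "smult2 c x = (\<lambda>i j. c * x i j)"

text \<open>Negation map (-): exchanges b_I and b_I'.\<close>
definition neg2 :: "('n \<Rightarrow> 'n \<Rightarrow> 'a::comm_semiring_1) \<Rightarrow> 'n \<Rightarrow> 'n \<Rightarrow> 'a" where
  "neg2 x = (\<lambda>i j. x j i)"

definition is_wedge2 :: "('n \<Rightarrow> 'n \<Rightarrow> 'a::comm_semiring_1) \<Rightarrow> bool" where
  "is_wedge2 x \<longleftrightarrow> (\<forall>i. x i i = 0)"

text \<open>Degree-2 part of the ideal generated by the quasi-zeros and all w \<and> w: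
 the A-span of the degree-2 generators (no generators live in degree < 2).\<close>
inductive_set qz_ideal2 :: "('n \<Rightarrow> 'n \<Rightarrow> 'a::comm_semiring_1) set" where
  zero: "zero2 \<in> qz_ideal2"
| quasi_zero: "is_wedge2 e \<Longrightarrow> add2 e (neg2 e) \<in> qz_ideal2"
| self_wedge: "wedge w w \<in> qz_ideal2"
| add: "d \<in> qz_ideal2 \<Longrightarrow> d' \<in> qz_ideal2 \<Longrightarrow> add2 d d' \<in> qz_ideal2"
| smult: "d \<in> qz_ideal2 \<Longrightarrow> smult2 c d \<in> qz_ideal2"

definition succeq2 :: "('n \<Rightarrow> 'n \<Rightarrow> 'a::comm_semiring_1) \<Rightarrow> ('n \<Rightarrow> 'n \<Rightarrow> 'a) \<Rightarrow> bool" where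
  "succeq2 x y \<longleftrightarrow> (\<exists>d \<in> qz_ideal2. x = add2 y d)"

definition succeq_ser :: "(nat \<Rightarrow> 'n \<Rightarrow> 'n \<Rightarrow> 'a::comm_semiring_1) \<Rightarrow> (nat \<Rightarrow> 'n \<Rightarrow> 'n \<Rightarrow> 'a) \<Rightarrow> bool" where
  "succeq_ser X Y \<longleftrightarrow> (\<forall>k. succeq2 (X k) (Y k))"

definition const_ser :: "('n \<Rightarrow> 'n \<Rightarrow> 'a::comm_semiring_1) \<Rightarrow> nat \<Rightarrow> 'n \<Rightarrow> 'n \<Rightarrow> 'a" where
  "const_ser x = (\<lambda>k. if k = 0 then x else zero2)"

definition is_linear_endo :: "(('n \<Rightarrow> 'a::comm_semiring_1) \<Rightarrow> ('n \<Rightarrow> 'a)) \<Rightarrow> bool" where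
  "is_linear_endo f \<longleftrightarrow>
     (\<forall>u v. f (\<lambda>i. u i + v i) = (\<lambda>i. f u i + f v i)) \<and>
     (\<forall>c u. f (\<lambda>i. c * u i) = (\<lambda>i. c * f u i))"

text \<open>D_k on the exterior square: A-linear, determined on basis elements b_i \<and> b_j by
 D(z)(b_i \<and> b_j) = D(z) b_i \<and> D(z) b_j, D_p v = f^p v.\<close>
definition HS_D2 :: "(('n::finite \<Rightarrow> 'a::comm_semiring_1) \<Rightarrow> ('n \<Rightarrow> 'a)) \<Rightarrow> nat \<Rightarrow>
    ('n \<Rightarrow> 'n \<Rightarrow> 'a) \<Rightarrow> 'n \<Rightarrow> 'n \<Rightarrow> 'a" where
  "HS_D2 f k x = (\<lambda>a b. \<Sum>i\<in>UNIV. \<Sum>j\<in>UNIV. if i = j then 0 else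
      x i j * (\<Sum>p\<le>k. wedge ((f ^^ p) (basis i)) ((f ^^ (k - p)) (basis j)) a b))"

definition HS_D_ser :: "(('n::finite \<Rightarrow> 'a::comm_semiring_1) \<Rightarrow> ('n \<Rightarrow> 'a)) \<Rightarrow>
    (nat \<Rightarrow> 'n \<Rightarrow> 'n \<Rightarrow> 'a) \<Rightarrow> nat \<Rightarrow> 'n \<Rightarrow> 'n \<Rightarrow> 'a" where
  "HS_D_ser f S = (\<lambda>k a b. \<Sum>m\<le>k. HS_D2 f (k - m) (S m) a b)"

definition Dbar_wedge :: "(('n \<Rightarrow> 'a::comm_semiring_1) \<Rightarrow> ('n \<Rightarrow> 'a)) \<Rightarrow> ('n \<Rightarrow> 'a) \<Rightarrow> ('n \<Rightarrow> 'a) \<Rightarrow>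
    nat \<Rightarrow> 'n \<Rightarrow> 'n \<Rightarrow> 'a" where
  "Dbar_wedge f x y = (\<lambda>k.
     if k = 0 then wedge x y
     else if k = 1 then add2 (wedge (f y) x) (wedge y (f x))
     else if k = 2 then wedge (f x) (f y)
     else zero2)"

definition Dbar2 :: "(('n::finite \<Rightarrow> 'a::comm_semiring_1) \<Rightarrow> ('n \<Rightarrow> 'a)) \<Rightarrow> nat \<Rightarrow>
    ('n \<Rightarrow> 'n \<Rightarrow> 'a) \<Rightarrow> 'n \<Rightarrow> 'n \<Rightarrow> 'a" where
  "Dbar2 f k x = (\<lambda>a b. \<Sum>i\<in>UNIV. \<Sum>j\<in>UNIV. if i = j then 0 else
      x i j * Dbar_wedge f (basis i) (basis j) k a b)"

definition Dbar_ser :: "(('n::finite \<Rightarrow> 'a::comm_semiring_1) \<Rightarrow> ('n \<Rightarrow> 'a)) \<Rightarrow>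
    (nat \<Rightarrow> 'n \<Rightarrow> 'n \<Rightarrow> 'a) \<Rightarrow> nat \<Rightarrow> 'n \<Rightarrow> 'n \<Rightarrow> 'a" where
  "Dbar_ser f S = (\<lambda>k a b. \<Sum>m\<le>k. Dbar2 f (k - m) (S m) a b)"

end

theory Submission
  imports Defs "HOL-Library.Countable"
begin

lemma sum_split_at:
  fixes g :: "'n::finite \<Rightarrow> 'a::comm_monoid_add"
  shows "(\<Sum>x\<in>UNIV. g x) = (\<Sum>x\<in>UNIV. if x = y then 0 else g x) + g y"
proof -
  have "(\<Sum>x\<in>UNIV. g x) = (\<Sum>x\<in>UNIV. (if x = y then 0 else g x) + (if x = y then g x else 0))"
    by (rule sum.cong) auto
  also have "\<dots> = (\<Sum>x\<in>UNIV. if x = y then 0 else g x) + (\<Sum>x\<in>UNIV. if x = y then g x else 0)"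
    by (rule sum.distrib)
  finally show ?thesis by simp
qed

lemma lin_zero:
  assumes "is_linear_endo f" shows "f (\<lambda>i. 0) = (\<lambda>i. 0)"
proof -
  have h: "\<And>c u. f (\<lambda>i. c * u i) = (\<lambda>i. c * f u i)" using assms by (simp add: is_linear_endo_def)
  have "f (\<lambda>i. 0 * 0) = (\<lambda>i. 0 * f (\<lambda>i. 0) i)" using h[of 0 "\<lambda>i. 0"] by simp
  then show ?thesis by simp
qed

lemma lin_sum:
  assumes "is_linear_endo f" and "finite S"
  shows "f (\<lambda>i. \<Sum>c\<in>S. g c i) = (\<lambda>i. \<Sum>c\<in>S. f (g c) i)"
  using assms(2)
proof (induction S rule: finite_induct)
  case empty then show ?case using lin_zero[OF assms(1)] by simp
next
  case (insert x F)
  have add: "f (\<lambda>i. g x i + (\<Sum>c\<in>F. g c i)) = (\<lambda>i. f (g x) i + f (\<lambda>i. \<Sum>c\<in>F. g c i) i)"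
    using assms(1) unfolding is_linear_endo_def by simp
  show ?case using insert add by simp
qed

definition Fm :: "(('n \<Rightarrow> 'a::comm_semiring_1) \<Rightarrow> ('n \<Rightarrow> 'a)) \<Rightarrow> 'n \<Rightarrow> 'n \<Rightarrow> 'a" where
  "Fm f a c = f (basis c) a"

lemma lin_apply:
  fixes f :: "('n::finite \<Rightarrow> 'a::comm_semiring_1) \<Rightarrow> ('n \<Rightarrow> 'a)"
  assumes "is_linear_endo f"
  shows "f x a = (\<Sum>c\<in>UNIV. Fm f a c * x c)"
proof -
  have x: "x = (\<lambda>i. \<Sum>c\<in>UNIV. x c * basis c i)"
  proof (rule ext)
    fix i
    have "(\<Sum>c\<in>UNIV. x c * basis c i) = (\<Sum>c\<in>UNIV. if i = c then x c else 0)"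
      by (rule sum.cong) (auto simp: basis_def)
    then show "x i = (\<Sum>c\<in>UNIV. x c * basis c i)" by simp
  qed
  have hom: "f (\<lambda>i. x c * basis c i) = (\<lambda>i. x c * f (basis c) i)" for c
    using assms unfolding is_linear_endo_def by simp
  have "f x = (\<lambda>i. \<Sum>c\<in>UNIV. f (\<lambda>i. x c * basis c i) i)"
    by (subst x) (rule lin_sum[OF assms], simp)
  then show ?thesis by (simp add: hom Fm_def mult.commute)
qed

definition Pm :: "(('n \<Rightarrow> 'a::comm_semiring_1) \<Rightarrow> ('n \<Rightarrow> 'a)) \<Rightarrow> nat \<Rightarrow> 'n \<Rightarrow> 'n \<Rightarrow> 'a" where
  "Pm f p a i = (f ^^ p) (basis i) a"

definition Km :: "(('n \<Rightarrow> 'a::comm_semiring_1) \<Rightarrow> ('n \<Rightarrow> 'a)) \<Rightarrow> nat \<Rightarrow> 'n \<Rightarrow> 'n \<Rightarrow> 'n \<Rightarrow> 'n \<Rightarrow> 'a" where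
  "Km f r a b i j = (\<Sum>p\<le>r. Pm f p a i * Pm f (r - p) b j)"

definition Qm :: "(('n::finite \<Rightarrow> 'a::comm_semiring_1) \<Rightarrow> ('n \<Rightarrow> 'a)) \<Rightarrow> nat \<Rightarrow> ('n \<Rightarrow> 'n \<Rightarrow> 'a) \<Rightarrow> 'n \<Rightarrow> 'n \<Rightarrow> 'a" where
  "Qm f r x a b = (\<Sum>i\<in>UNIV. \<Sum>j\<in>UNIV. if i = j then 0 else x i j * Km f r a b i j)"

lemma Pm0: "Pm f 0 a i = (if a = i then 1 else 0)"
  by (simp add: Pm_def basis_def)

lemma PmSuc:
  fixes f :: "('n::finite \<Rightarrow> 'a::comm_semiring_1) \<Rightarrow> ('n \<Rightarrow> 'a)"
  assumes "is_linear_endo f"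
  shows "Pm f (Suc p) a i = (\<Sum>c\<in>UNIV. Fm f a c * Pm f p c i)"
  by (simp add: Pm_def lin_apply[OF assms])

lemma KmSuc:
  fixes f :: "('n::finite \<Rightarrow> 'a::comm_semiring_1) \<Rightarrow> ('n \<Rightarrow> 'a)"
  assumes "is_linear_endo f"
  shows "Km f (Suc r) a b i j = (if a = i then Pm f (Suc r) b j else 0) + (\<Sum>c\<in>UNIV. Fm f a c * Km f r c b i j)"
proof -
  have "Km f (Suc r) a b i j = Pm f 0 a i * Pm f (Suc r) b j + (\<Sum>p\<le>r. Pm f (Suc p) a i * Pm f (r - p) b j)"
    unfolding Km_def by (subst sum.atMost_Suc_shift) simp
  also have "(\<Sum>p\<le>r. Pm f (Suc p) a i * Pm f (r - p) b j) = (\<Sum>p\<le>r. \<Sum>c\<in>UNIV. Fm f a c * (Pm f p c i * Pm f (r - p) b j))"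
    by (simp add: PmSuc[OF assms] sum_distrib_right mult.assoc)
  also have "\<dots> = (\<Sum>c\<in>UNIV. Fm f a c * Km f r c b i j)"
    unfolding Km_def by (subst sum.swap) (simp add: sum_distrib_left)
  finally show ?thesis by (simp add: Pm0)
qed

lemma Qm0: "Qm f 0 x a b = (if a = b then 0 else x a b)"
proof -
  have "Qm f 0 x a b = (\<Sum>i\<in>UNIV. \<Sum>j\<in>UNIV. if i = a \<and> j = b then (if a = b then 0 else x a b) else 0)"
    unfolding Qm_def by (intro sum.cong refl) (auto simp: Km_def Pm0)
  also have "\<dots> = (\<Sum>i\<in>UNIV. if i = a then (if a = b then 0 else x a b) else 0)"
    by (intro sum.cong refl) auto
  finally show ?thesis by simp
qed

lemma Qm_peel:
  fixes f :: "('n::finite \<Rightarrow> 'a::comm_semiring_1) \<Rightarrow> ('n \<Rightarrow> 'a)"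
  assumes "is_linear_endo f"
  shows "Qm f (Suc r) x a b = (\<Sum>c\<in>UNIV. Fm f a c * Qm f r x c b) + (\<Sum>j\<in>UNIV. if a = j then 0 else x a j * Pm f (Suc r) b j)"
proof -
  have "Qm f (Suc r) x a b = (\<Sum>i\<in>UNIV. \<Sum>j\<in>UNIV. (if i = j then 0 else x i j * (if a = i then Pm f (Suc r) b j else 0))
        + (\<Sum>c\<in>UNIV. Fm f a c * (if i = j then 0 else x i j * Km f r c b i j)))"
    unfolding Qm_def KmSuc[OF assms]
    by (intro sum.cong refl) (simp add: distrib_left sum_distrib_left mult.left_commute)
  also have "\<dots> = (\<Sum>i\<in>UNIV. \<Sum>j\<in>UNIV. (if i = j then 0 else x i j * (if a = i then Pm f (Suc r) b j else 0)))
        + (\<Sum>i\<in>UNIV. \<Sum>j\<in>UNIV. \<Sum>c\<in>UNIV. Fm f a c * (if i = j then 0 else x i j * Km f r c b i j))"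
    by (simp add: sum.distrib)
  also have "(\<Sum>i\<in>UNIV. \<Sum>j\<in>UNIV. \<Sum>c\<in>UNIV. Fm f a c * (if i = j then 0 else x i j * Km f r c b i j))
      = (\<Sum>c\<in>UNIV. Fm f a c * Qm f r x c b)"
    unfolding Qm_def sum_distrib_left
    by (subst sum.swap, rule sum.cong, rule refl, subst sum.swap, rule refl)
  also have "(\<Sum>i\<in>UNIV. \<Sum>j\<in>UNIV. (if i = j then 0 else x i j * (if a = i then Pm f (Suc r) b j else 0)))
      = (\<Sum>j\<in>UNIV. if a = j then 0 else x a j * Pm f (Suc r) b j)"
  proof -
    have "(\<Sum>j\<in>UNIV. (if i = j then 0 else x i j * (if a = i then Pm f (Suc r) b j else 0)))
       = (if a = i then (\<Sum>j\<in>UNIV. if a = j then 0 else x a j * Pm f (Suc r) b j) else 0)" for i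
      by (cases "a = i") (auto intro!: sum.cong sum.neutral)
    then show ?thesis by (simp add: sum.delta)
  qed
  finally show ?thesis by (simp add: add.commute)
qed


lemma sym_diag:
  fixes A B :: "'n::finite \<Rightarrow> 'n \<Rightarrow> 'a::comm_monoid_add"
  assumes "\<And>c. A c c = B c c"
  shows "(\<Sum>c\<in>UNIV. \<Sum>d\<in>UNIV. if c = d then 0 else A c d) + (\<Sum>c\<in>UNIV. \<Sum>d\<in>UNIV. B c d)
       = (\<Sum>c\<in>UNIV. \<Sum>d\<in>UNIV. if c = d then 0 else B c d) + (\<Sum>c\<in>UNIV. \<Sum>d\<in>UNIV. A c d)"
proof -
  have sA: "(\<Sum>d\<in>UNIV. A c d) = (\<Sum>d\<in>UNIV. if c = d then 0 else A c d) + A c c" for c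
    using sum_split_at[of "A c" c] by (simp add: eq_commute)
  have sB: "(\<Sum>d\<in>UNIV. B c d) = (\<Sum>d\<in>UNIV. if c = d then 0 else B c d) + B c c" for c
    using sum_split_at[of "B c" c] by (simp add: eq_commute)
  show ?thesis
    by (simp add: sA sB sum.distrib assms ac_simps)
qed

lemma claim2_core:
  fixes F Qk Qk1 q b1 b2 :: "'n::finite \<Rightarrow> 'n \<Rightarrow> 'a::comm_semiring_1"
  assumes h1: "\<And>a b. Qk a b = (\<Sum>c\<in>UNIV. F a c * Qk1 c b) + b2 a b"
    and h2: "\<And>c b. Qk1 c b = (\<Sum>d\<in>UNIV. F c d * q d b) + b1 c b"
    and h3: "\<And>a b. (\<Sum>j\<in>UNIV. F a j * b1 b j) = b2 b a"
  defines "E \<equiv> \<lambda>a b. Qk a b + (\<Sum>j\<in>UNIV. if b = j then 0 else Qk1 b j * F a j)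
      + (\<Sum>i\<in>UNIV. if i = a then 0 else Qk1 i a * F b i)
      + (\<Sum>i\<in>UNIV. \<Sum>j\<in>UNIV. if i = j then 0 else q i j * (F a i * F b j))"
  shows "E a b = E b a"
proof -
  define U where "U a b = (\<Sum>c\<in>UNIV. if c = b then 0 else F a c * Qk1 c b)" for a b
  define Wq where "Wq a b = (\<Sum>i\<in>UNIV. \<Sum>j\<in>UNIV. if i = j then 0 else q i j * (F a i * F b j))" for a b
  define Z where "Z a b = (\<Sum>j\<in>UNIV. \<Sum>c\<in>UNIV. F a j * (F b c * q c j))" for a b
  have eq: "E a b = U a b + U b a + b2 a b + b2 b a + Z a b + Wq a b" for a b
  proof -
    have s1: "(\<Sum>c\<in>UNIV. F a c * Qk1 c b) = U a b + F a b * Qk1 b b"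
      unfolding U_def by (rule sum_split_at)
    have t3: "(\<Sum>i\<in>UNIV. if i = a then 0 else Qk1 i a * F b i) = U b a"
      unfolding U_def by (rule sum.cong) (auto simp: mult.commute)
    have t2: "(\<Sum>j\<in>UNIV. if b = j then 0 else Qk1 b j * F a j) + F a b * Qk1 b b
        = (\<Sum>j\<in>UNIV. F a j * Qk1 b j)"
    proof -
      have "(\<Sum>j\<in>UNIV. F a j * Qk1 b j) = (\<Sum>j\<in>UNIV. if j = b then 0 else F a j * Qk1 b j) + F a b * Qk1 b b"
        by (rule sum_split_at)
      moreover have "(\<Sum>j\<in>UNIV. if j = b then 0 else F a j * Qk1 b j) = (\<Sum>j\<in>UNIV. if b = j then 0 else Qk1 b j * F a j)"
        by (rule sum.cong) (auto simp: mult.commute)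
      ultimately show ?thesis by simp
    qed
    have t2': "(\<Sum>j\<in>UNIV. F a j * Qk1 b j) = Z a b + b2 b a"
      unfolding Z_def h2 h3[symmetric]
      by (simp add: distrib_left sum.distrib sum_distrib_left)
    show ?thesis
      unfolding E_def h1[of a b] s1 t3 Wq_def[symmetric]
      using t2 t2' by (simp add: ac_simps)
  qed
  have fin: "Z a b + Wq a b = Z b a + Wq b a"
  proof -
    define A where "A c d = q c d * (F a c * F b d)" for c d
    define B where "B c d = q c d * (F b c * F a d)" for c d
    have ZB: "Z a b = (\<Sum>c\<in>UNIV. \<Sum>d\<in>UNIV. B c d)"
      unfolding Z_def B_def by (subst sum.swap) (simp add: ac_simps)
    have ZA: "Z b a = (\<Sum>c\<in>UNIV. \<Sum>d\<in>UNIV. A c d)"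
      unfolding Z_def A_def by (subst sum.swap) (simp add: ac_simps)
    have WA: "Wq a b = (\<Sum>c\<in>UNIV. \<Sum>d\<in>UNIV. if c = d then 0 else A c d)"
      unfolding Wq_def A_def ..
    have WB: "Wq b a = (\<Sum>c\<in>UNIV. \<Sum>d\<in>UNIV. if c = d then 0 else B c d)"
      unfolding Wq_def B_def ..
    have "A c c = B c c" for c unfolding A_def B_def by (simp add: ac_simps)
    from sym_diag[of A B, OF this] show ?thesis
      unfolding ZA ZB WA WB by (simp add: ac_simps)
  qed
  have e1: "E a b = (Z a b + Wq a b) + (U a b + U b a + b2 a b + b2 b a)" using eq[of a b] by (simp add: ac_simps)
  have e2: "E b a = (Z b a + Wq b a) + (U a b + U b a + b2 a b + b2 b a)" using eq[of b a] by (simp add: ac_simps)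
  show ?thesis unfolding e1 e2 fin ..
qed


definition Sm :: "(('n::finite \<Rightarrow> 'a::comm_semiring_1) \<Rightarrow> ('n \<Rightarrow> 'a)) \<Rightarrow> (nat \<Rightarrow> 'n \<Rightarrow> 'n \<Rightarrow> 'a) \<Rightarrow> nat \<Rightarrow> 'n \<Rightarrow> 'n \<Rightarrow> 'a" where
  "Sm f D k a b = (\<Sum>m\<le>k. Qm f (k - m) (D m) a b)"

definition Bm :: "(('n::finite \<Rightarrow> 'a::comm_semiring_1) \<Rightarrow> ('n \<Rightarrow> 'a)) \<Rightarrow> (nat \<Rightarrow> 'n \<Rightarrow> 'n \<Rightarrow> 'a) \<Rightarrow> nat \<Rightarrow> 'n \<Rightarrow> 'n \<Rightarrow> 'a" where
  "Bm f D k a b = (\<Sum>m\<le>k. \<Sum>j\<in>UNIV. if a = j then 0 else D m a j * Pm f (k - m) b j)"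

lemma delta0:
  fixes x :: "'n::finite \<Rightarrow> 'n \<Rightarrow> 'a::comm_semiring_1"
  shows "(\<Sum>j\<in>UNIV. if a = j then 0 else x a j * Pm f 0 b j) = (if a = b then 0 else x a b)"
proof -
  have "(\<Sum>j\<in>UNIV. if a = j then 0 else x a j * Pm f 0 b j) = (\<Sum>j\<in>UNIV. if j = b then (if a = b then 0 else x a b) else 0)"
    by (rule sum.cong) (auto simp: Pm0)
  then show ?thesis by simp
qed

lemma Sm_peel:
  fixes f :: "('n::finite \<Rightarrow> 'a::comm_semiring_1) \<Rightarrow> ('n \<Rightarrow> 'a)"
  assumes lin: "is_linear_endo f"
  shows "Sm f D (Suc k) a b = (\<Sum>c\<in>UNIV. Fm f a c * Sm f D k c b) + Bm f D (Suc k) a b"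
proof -
  have e1: "Qm f (Suc k - m) (D m) a b = (\<Sum>c\<in>UNIV. Fm f a c * Qm f (k-m) (D m) c b)
      + (\<Sum>j\<in>UNIV. if a = j then 0 else D m a j * Pm f (Suc k - m) b j)" if "m \<le> k" for m
  proof -
    have sk: "Suc k - m = Suc (k - m)" using that by (simp add: Suc_diff_le)
    show ?thesis unfolding sk by (rule Qm_peel[OF lin])
  qed
  have "Sm f D (Suc k) a b = (\<Sum>m\<le>k. Qm f (Suc k - m) (D m) a b) + Qm f 0 (D (Suc k)) a b"
    unfolding Sm_def by simp
  also have "(\<Sum>m\<le>k. Qm f (Suc k - m) (D m) a b) = (\<Sum>m\<le>k. (\<Sum>c\<in>UNIV. Fm f a c * Qm f (k-m) (D m) c b)
      + (\<Sum>j\<in>UNIV. if a = j then 0 else D m a j * Pm f (Suc k - m) b j))"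
    by (rule sum.cong) (auto simp: e1)
  also have "\<dots> = (\<Sum>m\<le>k. \<Sum>c\<in>UNIV. Fm f a c * Qm f (k-m) (D m) c b)
      + (\<Sum>m\<le>k. \<Sum>j\<in>UNIV. if a = j then 0 else D m a j * Pm f (Suc k - m) b j)"
    by (rule sum.distrib)
  also have "(\<Sum>m\<le>k. \<Sum>c\<in>UNIV. Fm f a c * Qm f (k-m) (D m) c b) = (\<Sum>c\<in>UNIV. Fm f a c * Sm f D k c b)"
    unfolding Sm_def sum_distrib_left by (rule sum.swap)
  also have "Qm f 0 (D (Suc k)) a b = (\<Sum>j\<in>UNIV. if a = j then 0 else D (Suc k) a j * Pm f 0 b j)"
    by (simp add: Qm0 delta0)
  finally show ?thesis unfolding Bm_def by (simp add: add.assoc cong: if_cong)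
qed

lemma Bm_shift:
  fixes f :: "('n::finite \<Rightarrow> 'a::comm_semiring_1) \<Rightarrow> ('n \<Rightarrow> 'a)"
  assumes lin: "is_linear_endo f"
  shows "(\<Sum>c\<in>UNIV. Fm f a c * Bm f D k b c) + (if b = a then 0 else D (Suc k) b a) = Bm f D (Suc k) b a"
proof -
  have "(\<Sum>c\<in>UNIV. Fm f a c * Bm f D k b c)
      = (\<Sum>c\<in>UNIV. \<Sum>m\<le>k. \<Sum>j\<in>UNIV. Fm f a c * (if b = j then 0 else D m b j * Pm f (k - m) c j))"
    unfolding Bm_def sum_distrib_left ..
  also have "\<dots> = (\<Sum>m\<le>k. \<Sum>c\<in>UNIV. \<Sum>j\<in>UNIV. Fm f a c * (if b = j then 0 else D m b j * Pm f (k - m) c j))"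
    by (rule sum.swap)
  also have "\<dots> = (\<Sum>m\<le>k. \<Sum>j\<in>UNIV. \<Sum>c\<in>UNIV. Fm f a c * (if b = j then 0 else D m b j * Pm f (k - m) c j))"
    by (rule sum.cong[OF refl], rule sum.swap)
  also have "\<dots> = (\<Sum>m\<le>k. \<Sum>j\<in>UNIV. if b = j then 0 else D m b j * Pm f (Suc k - m) a j)"
  proof (rule sum.cong[OF refl], rule sum.cong[OF refl])
    fix m j assume "m \<in> {..k}"
    then have "Suc k - m = Suc (k - m)" by (simp add: Suc_diff_le)
    then show "(\<Sum>c\<in>UNIV. Fm f a c * (if b = j then 0 else D m b j * Pm f (k - m) c j))
        = (if b = j then 0 else D m b j * Pm f (Suc k - m) a j)"
      by (simp add: PmSuc[OF lin] sum_distrib_left ac_simps)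
  qed
  moreover have "Bm f D (Suc k) b a = (\<Sum>m\<le>k. \<Sum>j\<in>UNIV. if b = j then 0 else D m b j * Pm f (Suc k - m) a j)
      + (if b = a then 0 else D (Suc k) b a)"
    unfolding Bm_def sum.atMost_Suc diff_self_eq_0 delta0 ..
  ultimately show ?thesis by simp
qed


lemma Pm1:
  fixes f :: "('n::finite \<Rightarrow> 'a::comm_semiring_1) \<Rightarrow> ('n \<Rightarrow> 'a)"
  assumes lin: "is_linear_endo f"
  shows "Pm f (Suc 0) b j = Fm f b j"
proof -
  have "Pm f (Suc 0) b j = (\<Sum>c\<in>UNIV. if c = j then Fm f b c else 0)"
    unfolding PmSuc[OF lin] by (rule sum.cong) (auto simp: Pm0)
  then show ?thesis by simp
qed

lemma S0_form: "Sm f (Dbar_wedge f u v) 0 c b = (if c = b then 0 else u c * v b)"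
  by (simp add: Sm_def Qm0 Dbar_wedge_def wedge_def)

lemma S1_sym:
  fixes f :: "('n::finite \<Rightarrow> 'a::comm_semiring_1) \<Rightarrow> ('n \<Rightarrow> 'a)"
  assumes lin: "is_linear_endo f"
  shows "Sm f (Dbar_wedge f u v) (Suc 0) a b = Sm f (Dbar_wedge f u v) (Suc 0) b a"
proof (cases "a = b")
  case True then show ?thesis by simp
next
  case False
  let ?F = "Fm f"
  define p where "p a b = (\<Sum>c\<in>UNIV. if c = b then 0 else v b * (?F a c * u c))" for a b
  define q where "q a b = (\<Sum>c\<in>UNIV. if c = b then 0 else u b * (?F a c * v c))" for a b
  have form: "Sm f (Dbar_wedge f u v) (Suc 0) a b = p a b + q b a + q a b + u b * (?F a b * v b) + p b a + v a * (?F b a * u a)"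
    if ab: "a \<noteq> b" for a b
  proof -
    have t1: "(\<Sum>c\<in>UNIV. ?F a c * Sm f (Dbar_wedge f u v) 0 c b) = p a b"
      unfolding p_def S0_form by (rule sum.cong) (auto simp: ac_simps)
    have B1: "Bm f (Dbar_wedge f u v) (Suc 0) a b
       = (\<Sum>j\<in>UNIV. if a = j then 0 else wedge u v a j * Pm f (Suc 0) b j)
         + (if a = b then 0 else Dbar_wedge f u v (Suc 0) a b)"
      unfolding Bm_def by (simp add: delta0 Dbar_wedge_def cong: if_cong)
    have t2: "(\<Sum>j\<in>UNIV. if a = j then 0 else wedge u v a j * Pm f (Suc 0) b j) = q b a"
      unfolding q_def Pm1[OF lin] by (rule sum.cong) (auto simp: wedge_def ac_simps)
    have D1: "Dbar_wedge f u v (Suc 0) a b = (\<Sum>c\<in>UNIV. ?F a c * v c) * u b + v a * (\<Sum>c\<in>UNIV. ?F b c * u c)"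
      using ab by (simp add: Dbar_wedge_def add2_def wedge_def lin_apply[OF lin])
    have s3: "(\<Sum>c\<in>UNIV. ?F a c * v c) * u b = q a b + u b * (?F a b * v b)"
    proof -
      have "(\<Sum>c\<in>UNIV. ?F a c * v c) * u b = (\<Sum>c\<in>UNIV. u b * (?F a c * v c))"
        by (simp add: sum_distrib_right sum_distrib_left ac_simps)
      also have "\<dots> = q a b + u b * (?F a b * v b)" unfolding q_def by (rule sum_split_at)
      finally show ?thesis .
    qed
    have s4: "v a * (\<Sum>c\<in>UNIV. ?F b c * u c) = p b a + v a * (?F b a * u a)"
    proof -
      have "v a * (\<Sum>c\<in>UNIV. ?F b c * u c) = (\<Sum>c\<in>UNIV. v a * (?F b c * u c))"
        by (simp add: sum_distrib_left)
      also have "\<dots> = p b a + v a * (?F b a * u a)" unfolding p_def by (rule sum_split_at)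
      finally show ?thesis .
    qed
    have "Sm f (Dbar_wedge f u v) (Suc 0) a b = p a b + (q b a + Dbar_wedge f u v (Suc 0) a b)"
      unfolding Sm_peel[OF lin, of _ 0] t1 B1 t2 using ab by simp
    then show ?thesis unfolding D1 s3 s4 by (simp add: ac_simps)
  qed
  show ?thesis using form[OF False] form[of b a] False by (simp add: ac_simps)
qed

lemma S_sym:
  fixes f :: "('n::finite \<Rightarrow> 'a::comm_semiring_1) \<Rightarrow> ('n \<Rightarrow> 'a)"
  assumes lin: "is_linear_endo f"
  shows "Sm f (Dbar_wedge f u v) (Suc k) a b = Sm f (Dbar_wedge f u v) (Suc k) b a"
proof (induction k arbitrary: a b rule: less_induct)
  case (less k)
  let ?D = "Dbar_wedge f u v"
  let ?S = "Sm f ?D"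
  let ?B = "Bm f ?D"
  let ?F = "Fm f"
  show ?case
  proof (cases k)
    case 0 then show ?thesis using S1_sym[OF lin] by simp
  next
    case (Suc k')
    define Y where "Y a b = (\<Sum>c\<in>UNIV. \<Sum>d\<in>UNIV. ?F a c * (?F b d * ?S k' d c))" for a b
    have form: "?S (Suc (Suc k')) a b = (Y a b + (if a = b then 0 else ?D (Suc (Suc k')) a b))
        + ((\<Sum>c\<in>UNIV. ?F a c * ?B (Suc k') b c) + (\<Sum>d\<in>UNIV. ?F b d * ?B (Suc k') a d))" for a b
    proof -
      have IH: "?S (Suc k') c b = ?S (Suc k') b c" for c b using less Suc by simp
      have "?S (Suc (Suc k')) a b = (\<Sum>c\<in>UNIV. ?F a c * ?S (Suc k') c b) + ?B (Suc (Suc k')) a b"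
        by (rule Sm_peel[OF lin])
      also have "(\<Sum>c\<in>UNIV. ?F a c * ?S (Suc k') c b) = (\<Sum>c\<in>UNIV. ?F a c * ((\<Sum>d\<in>UNIV. ?F b d * ?S k' d c) + ?B (Suc k') b c))"
      proof (rule sum.cong[OF refl])
        fix c
        show "?F a c * ?S (Suc k') c b = ?F a c * ((\<Sum>d\<in>UNIV. ?F b d * ?S k' d c) + ?B (Suc k') b c)"
          unfolding IH[of c b] Sm_peel[OF lin, of _ k' b c] ..
      qed
      also have "\<dots> = Y a b + (\<Sum>c\<in>UNIV. ?F a c * ?B (Suc k') b c)"
        unfolding Y_def by (simp add: distrib_left sum.distrib sum_distrib_left)
      also have "?B (Suc (Suc k')) a b = (\<Sum>d\<in>UNIV. ?F b d * ?B (Suc k') a d) + (if a = b then 0 else ?D (Suc (Suc k')) a b)"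
        using Bm_shift[OF lin, of b ?D "Suc k'" a] by simp
      finally show ?thesis by (simp add: ac_simps)
    qed
    have key: "Y a b + (if a = b then 0 else ?D (Suc (Suc k')) a b) = Y b a + (if a = b then 0 else ?D (Suc (Suc k')) b a)"
    proof (cases k')
      case 0
      show ?thesis
      proof (cases "a = b")
        case True then show ?thesis by simp
      next
        case False
        define A where "A c d = ?F a c * ?F b d * u d * v c" for c d
        define B where "B c d = ?F b c * ?F a d * u d * v c" for c d
        have YA: "Y a b = (\<Sum>c\<in>UNIV. \<Sum>d\<in>UNIV. if c = d then 0 else A c d)"
          unfolding Y_def A_def 0 S0_form by (intro sum.cong refl) (auto simp: ac_simps)
        have YB: "Y b a = (\<Sum>c\<in>UNIV. \<Sum>d\<in>UNIV. if c = d then 0 else B c d)"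
          unfolding Y_def B_def 0 S0_form by (intro sum.cong refl) (auto simp: ac_simps)
        have Dab: "?D (Suc (Suc 0)) a b = (\<Sum>c\<in>UNIV. \<Sum>d\<in>UNIV. B c d)"
        proof -
          have "?D (Suc (Suc 0)) a b = (\<Sum>c\<in>UNIV. ?F a c * u c) * (\<Sum>d\<in>UNIV. ?F b d * v d)"
            using False by (simp add: Dbar_wedge_def wedge_def lin_apply[OF lin])
          also have "\<dots> = (\<Sum>d\<in>UNIV. \<Sum>c\<in>UNIV. B c d)"
            unfolding B_def by (simp add: sum_product ac_simps)
          also have "\<dots> = (\<Sum>c\<in>UNIV. \<Sum>d\<in>UNIV. B c d)" by (rule sum.swap)
          finally show ?thesis .
        qed
        have Dba: "?D (Suc (Suc 0)) b a = (\<Sum>c\<in>UNIV. \<Sum>d\<in>UNIV. A c d)"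
        proof -
          have "?D (Suc (Suc 0)) b a = (\<Sum>c\<in>UNIV. ?F b c * u c) * (\<Sum>d\<in>UNIV. ?F a d * v d)"
            using False by (simp add: Dbar_wedge_def wedge_def lin_apply[OF lin])
          also have "\<dots> = (\<Sum>d\<in>UNIV. \<Sum>c\<in>UNIV. A c d)"
            unfolding A_def by (simp add: sum_product ac_simps)
          also have "\<dots> = (\<Sum>c\<in>UNIV. \<Sum>d\<in>UNIV. A c d)" by (rule sum.swap)
          finally show ?thesis .
        qed
        have "A c c = B c c" for c unfolding A_def B_def by (simp add: ac_simps)
        from sym_diag[of A B, OF this] show ?thesis
          using False unfolding 0 YA YB Dab Dba by simp
      qed
    next
      case (Suc k'')
      have IH: "?S k' c d = ?S k' d c" for c d using less \<open>k = Suc k'\<close> Suc by simp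
      have Dz: "?D (Suc (Suc k')) = zero2" using Suc by (simp add: Dbar_wedge_def)
      have "Y b a = (\<Sum>c\<in>UNIV. \<Sum>d\<in>UNIV. ?F b d * (?F a c * ?S k' c d))"
        unfolding Y_def by (rule sum.swap)
      also have "\<dots> = Y a b"
        unfolding Y_def
      proof (intro sum.cong refl)
        fix c d
        show "?F b d * (?F a c * ?S k' c d) = ?F a c * (?F b d * ?S k' d c)"
          unfolding IH[of c d] by (rule mult.left_commute)
      qed
      finally have "Y a b = Y b a" by simp
      then show ?thesis by (simp add: Dz zero2_def)
    qed
    show ?thesis
    proof (cases "a = b")
      case True then show ?thesis by simp
    next
      case False
      have key': "Y b a + (if b = a then 0 else ?D (Suc (Suc k')) b a) = Y b a + (if a = b then 0 else ?D (Suc (Suc k')) b a)"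
        using False by simp
      show ?thesis
        unfolding Suc form[of a b] form[of b a] key key'
        by (simp add: add.commute)
    qed
  qed
qed


lemma HS_D2_Qm:
  "HS_D2 f k x a b = (if a = b then 0 else Qm f k x a b)"
proof -
  have w: "wedge ((f ^^ p) (basis i)) ((f ^^ (k - p)) (basis j)) a b
      = (if a = b then 0 else Pm f p a i * Pm f (k - p) b j)" for p i j
    by (simp add: wedge_def Pm_def)
  show ?thesis
    unfolding HS_D2_def w Qm_def Km_def by (cases "a = b") (auto intro!: sum.cong sum.neutral)
qed

lemma sym_in_ideal:
  fixes x :: "'n::finite \<Rightarrow> 'n \<Rightarrow> 'a::comm_semiring_1"
  assumes d: "\<And>i. x i i = 0" and s: "\<And>i j. x i j = x j i"
  shows "x \<in> qz_ideal2"
proof -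
  define e where "e i j = (if to_nat i < to_nat j then x i j else 0)" for i j
  have we: "is_wedge2 e" by (simp add: is_wedge2_def e_def)
  have "x i j = add2 e (neg2 e) i j" for i j
  proof -
    consider "to_nat i < to_nat j" | "to_nat j < to_nat i" | "to_nat i = to_nat j" by linarith
    then show ?thesis
    proof cases
      case 1 then show ?thesis by (simp add: add2_def neg2_def e_def)
    next
      case 2 then show ?thesis by (simp add: add2_def neg2_def e_def s)
    next
      case 3 then have "i = j" by (simp add: inj_eq[OF inj_to_nat])
      then show ?thesis by (simp add: add2_def neg2_def e_def d)
    qed
  qed
  then have "x = add2 e (neg2 e)" by (intro ext)
  then show ?thesis using qz_ideal2.quasi_zero[OF we] by simp
qed

lemma in_ideal_from:
  fixes G :: "'n::finite \<Rightarrow> 'n \<Rightarrow> 'a::comm_semiring_1"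
  assumes "\<And>a b. a \<noteq> b \<Longrightarrow> G a b = G b a"
  shows "(\<lambda>a b. if a = b then 0 else G a b) \<in> qz_ideal2"
  by (rule sym_in_ideal) (auto simp: assms)

lemma HS_D_ser_const:
  "HS_D_ser f (const_ser x) m = HS_D2 f m x"
proof (intro ext)
  fix a b
  have z: "HS_D2 f r zero2 a b = 0" for r by (simp add: HS_D2_def zero2_def cong: if_cong)
  have "HS_D_ser f (const_ser x) m a b = (\<Sum>m'\<le>m. if m' = 0 then HS_D2 f m x a b else 0)"
    unfolding HS_D_ser_def by (rule sum.cong) (auto simp: const_ser_def z)
  then show "HS_D_ser f (const_ser x) m a b = HS_D2 f m x a b" by simp
qed

lemma Dbar2_0: "Dbar2 f 0 M a b = (if a = b then 0 else M a b)"
proof -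
  have "Dbar2 f 0 M a b = (\<Sum>i\<in>UNIV. \<Sum>j\<in>UNIV. if i = a \<and> j = b then (if a = b then 0 else M a b) else 0)"
    unfolding Dbar2_def by (intro sum.cong refl) (auto simp: Dbar_wedge_def wedge_def basis_def)
  also have "\<dots> = (\<Sum>i\<in>UNIV. if i = a then (if a = b then 0 else M a b) else 0)"
    by (intro sum.cong refl) auto
  finally show ?thesis by simp
qed

lemma Dbar2_1: "Dbar2 f (Suc 0) M a b = (if a = b then 0 else
   (\<Sum>j\<in>UNIV. if b = j then 0 else M b j * Fm f a j) + (\<Sum>i\<in>UNIV. if i = a then 0 else M i a * Fm f b i))"
proof (cases "a = b")
  case True then show ?thesis
    by (simp add: Dbar2_def Dbar_wedge_def add2_def wedge_def cong: if_cong)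
next
  case False
  have "Dbar2 f (Suc 0) M a b = (\<Sum>i\<in>UNIV. \<Sum>j\<in>UNIV.
      (if i = j then 0 else M i j * (Fm f a j * (if b = i then 1 else 0)))
      + (if i = j then 0 else M i j * ((if a = j then 1 else 0) * Fm f b i)))"
    unfolding Dbar2_def using False
    by (intro sum.cong refl) (auto simp: Dbar_wedge_def add2_def wedge_def basis_def Fm_def distrib_left)
  also have "\<dots> = (\<Sum>i\<in>UNIV. \<Sum>j\<in>UNIV. (if i = j then 0 else M i j * (Fm f a j * (if b = i then 1 else 0))))
      + (\<Sum>i\<in>UNIV. \<Sum>j\<in>UNIV. (if i = j then 0 else M i j * ((if a = j then 1 else 0) * Fm f b i)))"
    by (simp add: sum.distrib)
  also have "(\<Sum>i\<in>UNIV. \<Sum>j\<in>UNIV. (if i = j then 0 else M i j * (Fm f a j * (if b = i then 1 else 0))))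
      = (\<Sum>j\<in>UNIV. if b = j then 0 else M b j * Fm f a j)"
  proof -
    have "(\<Sum>j\<in>UNIV. (if i = j then 0 else M i j * (Fm f a j * (if b = i then 1 else 0))))
       = (if i = b then (\<Sum>j\<in>UNIV. if b = j then 0 else M b j * Fm f a j) else 0)" for i
      by (cases "i = b") (auto intro!: sum.cong sum.neutral)
    then show ?thesis by simp
  qed
  also have "(\<Sum>i\<in>UNIV. \<Sum>j\<in>UNIV. (if i = j then 0 else M i j * ((if a = j then 1 else 0) * Fm f b i)))
      = (\<Sum>i\<in>UNIV. if i = a then 0 else M i a * Fm f b i)"
  proof -
    have "(\<Sum>j\<in>UNIV. (if i = j then 0 else M i j * ((if a = j then 1 else 0) * Fm f b i)))
       = (\<Sum>j\<in>UNIV. if j = a then (if i = a then 0 else M i a * Fm f b i) else 0)" for i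
      by (intro sum.cong refl) auto
    then show ?thesis by simp
  qed
  finally show ?thesis using False by simp
qed

lemma Dbar2_2: "Dbar2 f (Suc (Suc 0)) M a b = (if a = b then 0 else
   (\<Sum>i\<in>UNIV. \<Sum>j\<in>UNIV. if i = j then 0 else M i j * (Fm f a i * Fm f b j)))"
  by (cases "a = b") (simp_all add: Dbar2_def Dbar_wedge_def wedge_def Fm_def cong: if_cong)

lemma Dbar2_3: "Dbar2 f (Suc (Suc (Suc r))) M a b = 0"
  by (simp add: Dbar2_def Dbar_wedge_def zero2_def cong: if_cong)

lemma offdiag_sum1:
  fixes N :: "'n::finite \<Rightarrow> 'n \<Rightarrow> 'a::comm_semiring_1"
  shows "(\<Sum>j\<in>UNIV. if b = j then 0 else (if b = j then 0 else N b j) * g j) = (\<Sum>j\<in>UNIV. if b = j then 0 else N b j * g j)"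
    "(\<Sum>i\<in>UNIV. if i = a then 0 else (if i = a then 0 else N i a) * g i) = (\<Sum>i\<in>UNIV. if i = a then 0 else N i a * g i)"
    "(\<Sum>i\<in>UNIV. \<Sum>j\<in>UNIV. if i = j then 0 else (if i = j then 0 else N i j) * h i j) = (\<Sum>i\<in>UNIV. \<Sum>j\<in>UNIV. if i = j then 0 else N i j * h i j)"
  by (intro sum.cong refl; auto)+

lemma claim2_sym:
  fixes f :: "('n::finite \<Rightarrow> 'a::comm_semiring_1) \<Rightarrow> ('n \<Rightarrow> 'a)"
  assumes lin: "is_linear_endo f"
  shows "\<exists>G. Dbar_ser f (HS_D_ser f (const_ser W)) (Suc k0) = (\<lambda>a b. if a = b then 0 else G a b)
     \<and> (\<forall>a b. G a b = G b a)"
proof -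
  let ?F = "Fm f"
  let ?H = "\<lambda>m. HS_D2 f m W"
  define q where "q = (case k0 of 0 \<Rightarrow> (\<lambda>a b. 0) | Suc k1 \<Rightarrow> Qm f k1 W)"
  define b1 where "b1 c b = (\<Sum>j\<in>UNIV. if c = j then 0 else W c j * Pm f k0 b j)" for c b
  define b2 where "b2 c b = (\<Sum>j\<in>UNIV. if c = j then 0 else W c j * Pm f (Suc k0) b j)" for c b
  define E where "E \<equiv> \<lambda>a b. Qm f (Suc k0) W a b + (\<Sum>j\<in>UNIV. if b = j then 0 else Qm f k0 W b j * ?F a j)
      + (\<Sum>i\<in>UNIV. if i = a then 0 else Qm f k0 W i a * ?F b i)
      + (\<Sum>i\<in>UNIV. \<Sum>j\<in>UNIV. if i = j then 0 else q i j * (?F a i * ?F b j))"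
  have h1: "\<And>a b. Qm f (Suc k0) W a b = (\<Sum>c\<in>UNIV. ?F a c * Qm f k0 W c b) + b2 a b"
    unfolding b2_def by (rule Qm_peel[OF lin])
  have h2: "\<And>c b. Qm f k0 W c b = (\<Sum>d\<in>UNIV. ?F c d * q d b) + b1 c b"
  proof (cases k0)
    case 0 show "Qm f k0 W c b = (\<Sum>d\<in>UNIV. ?F c d * q d b) + b1 c b" for c b
      unfolding q_def b1_def 0 by (simp add: Qm0 delta0)
  next
    case (Suc k1) show "Qm f k0 W c b = (\<Sum>d\<in>UNIV. ?F c d * q d b) + b1 c b" for c b
      unfolding q_def b1_def Suc nat.case by (rule Qm_peel[OF lin])
  qed
  have h3: "\<And>a b. (\<Sum>j\<in>UNIV. ?F a j * b1 b j) = b2 b a"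
  proof -
    fix a b
    have "(\<Sum>j\<in>UNIV. ?F a j * b1 b j) = (\<Sum>j\<in>UNIV. \<Sum>i\<in>UNIV. ?F a j * (if b = i then 0 else W b i * Pm f k0 j i))"
      unfolding b1_def sum_distrib_left ..
    also have "\<dots> = (\<Sum>i\<in>UNIV. \<Sum>j\<in>UNIV. ?F a j * (if b = i then 0 else W b i * Pm f k0 j i))"
      by (rule sum.swap)
    also have "\<dots> = b2 b a"
      unfolding b2_def
      by (intro sum.cong refl) (simp add: PmSuc[OF lin] sum_distrib_left ac_simps)
    finally show "(\<Sum>j\<in>UNIV. ?F a j * b1 b j) = b2 b a" .
  qed
  have sym: "E a b = E b a" for a b
    unfolding E_def by (rule claim2_core[OF h1 h2 h3])
  have form: "Dbar_ser f (HS_D_ser f (const_ser W)) (Suc k0) a b = (if a = b then 0 else E a b)" for a b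
  proof -
    have "Dbar_ser f (HS_D_ser f (const_ser W)) (Suc k0) a b = (\<Sum>m\<le>Suc k0. Dbar2 f (Suc k0 - m) (?H m) a b)"
      unfolding Dbar_ser_def HS_D_ser_const ..
    also have "\<dots> = (\<Sum>m\<le>k0. Dbar2 f (Suc k0 - m) (?H m) a b) + Dbar2 f 0 (?H (Suc k0)) a b"
      by simp
    also have "(\<Sum>m\<le>k0. Dbar2 f (Suc k0 - m) (?H m) a b) = Dbar2 f (Suc 0) (?H k0) a b
        + (case k0 of 0 \<Rightarrow> 0 | Suc k1 \<Rightarrow> Dbar2 f (Suc (Suc 0)) (?H k1) a b)"
    proof (cases k0)
      case 0 then show ?thesis by simp
    next
      case (Suc k1)
      have "(\<Sum>m\<le>k1. Dbar2 f (Suc (Suc k1) - m) (?H m) a b) = (\<Sum>m\<le>k1. if m = k1 then Dbar2 f (Suc (Suc 0)) (?H k1) a b else 0)"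
      proof (rule sum.cong[OF refl])
        fix m assume "m \<in> {..k1}"
        then have "m \<le> k1" by simp
        show "Dbar2 f (Suc (Suc k1) - m) (?H m) a b = (if m = k1 then Dbar2 f (Suc (Suc 0)) (?H k1) a b else 0)"
        proof (cases "m = k1")
          case True then show ?thesis by (simp add: numeral_2_eq_2)
        next
          case False
          with \<open>m \<le> k1\<close> have "Suc (Suc k1) - m = Suc (Suc (Suc (k1 - m - 1)))" by simp
          then show ?thesis using False by (simp add: Dbar2_3)
        qed
      qed
      then show ?thesis using Suc by (simp add: add.commute)
    qed
    finally have eq: "Dbar_ser f (HS_D_ser f (const_ser W)) (Suc k0) a b = Dbar2 f (Suc 0) (?H k0) a b
        + (case k0 of 0 \<Rightarrow> 0 | Suc k1 \<Rightarrow> Dbar2 f (Suc (Suc 0)) (?H k1) a b) + Dbar2 f 0 (?H (Suc k0)) a b" .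
    have last: "(case k0 of 0 \<Rightarrow> 0 | Suc k1 \<Rightarrow> Dbar2 f (Suc (Suc 0)) (?H k1) a b)
       = (if a = b then 0 else (\<Sum>i\<in>UNIV. \<Sum>j\<in>UNIV. if i = j then 0 else q i j * (?F a i * ?F b j)))"
      by (cases k0) (simp_all add: q_def Dbar2_2 HS_D2_Qm[abs_def] offdiag_sum1 cong: if_cong)
    show ?thesis
      unfolding eq last unfolding Dbar2_1 Dbar2_0 HS_D2_Qm[abs_def] offdiag_sum1 E_def
      by (simp add: ac_simps)
  qed
  show ?thesis
    by (rule exI[of _ E]) (simp add: form[abs_def] sym)
qed

theorem proposition3p4:
  fixes f :: "('n::finite \<Rightarrow> 'a::comm_semiring_1) \<Rightarrow> ('n \<Rightarrow> 'a)"
    and u v :: "'n \<Rightarrow> 'a"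
  assumes "card (UNIV :: 'n set) \<ge> 2"
    and "is_linear_endo f"
  shows "succeq_ser (HS_D_ser f (Dbar_wedge f u v)) (const_ser (wedge u v)) \<and>
         succeq_ser (Dbar_ser f (HS_D_ser f (const_ser (wedge u v)))) (const_ser (wedge u v))"
proof
  note lin = assms(2)
  let ?D = "Dbar_wedge f u v"
  have w0: "add2 (wedge u v) zero2 = wedge u v" by (simp add: add2_def zero2_def)
  have z0: "\<And>d. add2 zero2 d = d" by (simp add: add2_def zero2_def)
  show "succeq_ser (HS_D_ser f ?D) (const_ser (wedge u v))"
    unfolding succeq_ser_def succeq2_def
  proof
    fix k
    show "\<exists>d\<in>qz_ideal2. HS_D_ser f ?D k = add2 (const_ser (wedge u v) k) d"
    proof (cases k)
      case 0
      have "HS_D_ser f ?D 0 = wedge u v"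
        by (auto simp: HS_D_ser_def HS_D2_Qm Qm0 Dbar_wedge_def wedge_def fun_eq_iff)
      then show ?thesis using 0 w0 by (intro bexI[of _ zero2] qz_ideal2.zero) (simp add: const_ser_def)
    next
      case (Suc k')
      have eq: "HS_D_ser f ?D k = (\<lambda>a b. if a = b then 0 else Sm f ?D k a b)"
        unfolding HS_D_ser_def Sm_def HS_D2_Qm by (intro ext) (simp cong: if_cong)
      have "(\<lambda>a b. if a = b then 0 else Sm f ?D k a b) \<in> qz_ideal2"
        unfolding Suc by (rule in_ideal_from) (rule S_sym[OF lin])
      then have "HS_D_ser f ?D k \<in> qz_ideal2" by (simp only: eq)
      then show ?thesis using Suc z0 by (intro bexI[of _ "HS_D_ser f ?D k"]) (simp_all add: const_ser_def z0)
    qed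
  qed
  show "succeq_ser (Dbar_ser f (HS_D_ser f (const_ser (wedge u v)))) (const_ser (wedge u v))"
    unfolding succeq_ser_def succeq2_def
  proof
    fix k
    show "\<exists>d\<in>qz_ideal2. Dbar_ser f (HS_D_ser f (const_ser (wedge u v))) k = add2 (const_ser (wedge u v) k) d"
    proof (cases k)
      case 0
      have "Dbar_ser f (HS_D_ser f (const_ser (wedge u v))) 0 = wedge u v"
        by (auto simp: Dbar_ser_def HS_D_ser_const Dbar2_0 HS_D2_Qm Qm0 wedge_def fun_eq_iff)
      then show ?thesis using 0 w0 by (intro bexI[of _ zero2] qz_ideal2.zero) (simp add: const_ser_def)
    next
      case (Suc k0)
      obtain G where G: "Dbar_ser f (HS_D_ser f (const_ser (wedge u v))) (Suc k0) = (\<lambda>a b. if a = b then 0 else G a b)"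
        and Gs: "\<forall>a b. G a b = G b a"
        using claim2_sym[OF lin, of "wedge u v" k0] by blast
      have "Dbar_ser f (HS_D_ser f (const_ser (wedge u v))) k \<in> qz_ideal2"
        unfolding Suc G by (rule in_ideal_from) (simp add: Gs)
      then show ?thesis using Suc z0
        by (intro bexI[of _ "Dbar_ser f (HS_D_ser f (const_ser (wedge u v))) k"]) (simp_all add: const_ser_def z0)
    qed
  qed
qed

end
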